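(* Let $b_1,b_2,b_3,b_4\in\mathbb C^*$, $B=b_1b_2b_3b_4$, and let $\Lambda\in\mathbb C^*$ with $\Lambda^2\neq B$. Put $\lambda=\Lambda^2/B$, $$F_{\rm eq}=-\frac{B\Lambda(S_1^++2S_1^-\Lambda+S_3^-\Lambda^2)}{(B-\Lambda^2)^2},\quad G_{\rm eq}=-\frac{B\Lambda(S_3^++2S_1^+\Lambda+S_1^-\Lambda^2)}{(B-\Lambda^2)^2},$$ $$\mu=\frac{\Lambda(\Lambda+b_1b_2)(\Lambda+b_1b_3)(\Lambda+b_1b_4)(\Lambda+b_2b_3)(\Lambda+b_2b_4)(\Lambda+b_3b_4)}{(B-\Lambda^2)^4},$$ and for $\phi\in\mathbb C^*$ define $$F(\phi)=\phi+F_{\rm eq}+\mu\phi^{-1},\qquad G(\phi)=\Lambda\phi+G_{\rm eq}+\frac{B}{\Lambda}\mu\phi^{-1}.$$ Then, as identities of rational functions in $\phi$, with $F=F(\phi)$, $G=G(\phi)$, $\bar F=F(\lambda\phi)$, $\bar G=G(\lambda\phi)$: $$(GF-1)(G\bar F-1)=(b_1^{-1}G-1)(b_2^{-1}G-1)(b_3^{-1}G-1)(b_4^{-1}G-1),$$ $$(G\bar F-1)(\bar G\bar F-1)=(b_1\bar F-1)(b_2\bar F-1)(b_3\bar F-1)(b_4\bar F-1).$$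
   Context: $S_i^{\pm}$ denotes the $i$-th elementary symmetric polynomial in $b_1^{\pm1},b_2^{\pm1},b_3^{\pm1},b_4^{\pm1}$, i.e. $(z-b_1^{\pm1})(z-b_2^{\pm1})(z-b_3^{\pm1})(z-b_4^{\pm1})=z^4-S_1^\pm z^3+S_2^\pm z^2-S_3^\pm z+S_4^\pm$. *)

theory Defs
  imports Complex_Main
begin

definition esym1 :: "complex \<Rightarrow> complex \<Rightarrow> complex \<Rightarrow> complex \<Rightarrow> complex" where
  "esym1 a b c d = a + b + c + d"
definition esym2 :: "complex \<Rightarrow> complex \<Rightarrow> complex \<Rightarrow> complex \<Rightarrow> complex" where
  "esym2 a b c d = a*b + a*c + a*d + b*c + b*d + c*d"
definition esym3 :: "complex \<Rightarrow> complex \<Rightarrow> complex \<Rightarrow> complex \<Rightarrow> complex" where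
  "esym3 a b c d = a*b*c + a*b*d + a*c*d + b*c*d"
definition esym4 :: "complex \<Rightarrow> complex \<Rightarrow> complex \<Rightarrow> complex \<Rightarrow> complex" where
  "esym4 a b c d = a*b*c*d"

definition Sp1 where "Sp1 b1 b2 b3 b4 = esym1 b1 b2 b3 b4"
definition Sp3 where "Sp3 b1 b2 b3 b4 = esym3 b1 b2 b3 b4"
definition Sm1 where "Sm1 b1 b2 b3 b4 = esym1 (inverse b1) (inverse b2) (inverse b3) (inverse b4)"
definition Sm3 where "Sm3 b1 b2 b3 b4 = esym3 (inverse b1) (inverse b2) (inverse b3) (inverse b4)"

definition Bprod :: "complex \<Rightarrow> complex \<Rightarrow> complex \<Rightarrow> complex \<Rightarrow> complex" where
  "Bprod b1 b2 b3 b4 = b1*b2*b3*b4"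

definition Feq :: "complex \<Rightarrow> complex \<Rightarrow> complex \<Rightarrow> complex \<Rightarrow> complex \<Rightarrow> complex" where
  "Feq b1 b2 b3 b4 L = - (Bprod b1 b2 b3 b4 * L *
      (Sp1 b1 b2 b3 b4 + 2 * Sm1 b1 b2 b3 b4 * L + Sm3 b1 b2 b3 b4 * L^2))
      / (Bprod b1 b2 b3 b4 - L^2)^2"

definition Geq :: "complex \<Rightarrow> complex \<Rightarrow> complex \<Rightarrow> complex \<Rightarrow> complex \<Rightarrow> complex" where
  "Geq b1 b2 b3 b4 L = - (Bprod b1 b2 b3 b4 * L *
      (Sp3 b1 b2 b3 b4 + 2 * Sp1 b1 b2 b3 b4 * L + Sm1 b1 b2 b3 b4 * L^2))
      / (Bprod b1 b2 b3 b4 - L^2)^2"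

definition muc :: "complex \<Rightarrow> complex \<Rightarrow> complex \<Rightarrow> complex \<Rightarrow> complex \<Rightarrow> complex" where
  "muc b1 b2 b3 b4 L = L * (L + b1*b2) * (L + b1*b3) * (L + b1*b4) * (L + b2*b3)
      * (L + b2*b4) * (L + b3*b4) / (Bprod b1 b2 b3 b4 - L^2)^4"

definition Ffun :: "complex \<Rightarrow> complex \<Rightarrow> complex \<Rightarrow> complex \<Rightarrow> complex \<Rightarrow> complex \<Rightarrow> complex" where
  "Ffun b1 b2 b3 b4 L \<phi> = \<phi> + Feq b1 b2 b3 b4 L + muc b1 b2 b3 b4 L * inverse \<phi>"

definition Gfun :: "complex \<Rightarrow> complex \<Rightarrow> complex \<Rightarrow> complex \<Rightarrow> complex \<Rightarrow> complex \<Rightarrow> complex" where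
  "Gfun b1 b2 b3 b4 L \<phi> = L * \<phi> + Geq b1 b2 b3 b4 L
      + Bprod b1 b2 b3 b4 / L * muc b1 b2 b3 b4 L * inverse \<phi>"

end

theory Submission
  imports Defs
begin

definition "PeF e1 e2 e3 e4 L = L^6+e2*L^5+(e1*e3-e4)*L^4+(e1^2*e4+e3^2-2*e2*e4)*L^3+e4*(e1*e3-e4)*L^2+e4^2*e2*L+(e4::complex)^3"

lemma eq1:
  fixes e1 e2 e3 e4 L z Pe d A1 A2 y yb g f fb :: complex
  assumes "Pe = PeF e1 e2 e3 e4 L"
  and "d = (e4-L^2)^2"
  and "A1 = -L*(e4*e1+2*e3*L+e1*L^2)" and "A2 = -L*(e4*e3+2*e4*e1*L+e3*L^2)"
  and "y = e4*z" and "yb = L^2*z"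
  and "g = L*y^2+A2*y+e4*Pe" and "f = y^2+A1*y+L*Pe" and "fb = yb^2+A1*yb+L*Pe"
  shows "e4*y*(g*f-d^2*y^2)*(g*fb-d^2*y*yb)
   = yb*(g^4-e1*g^3*d*y+e2*g^2*d^2*y^2-e3*g*d^3*y^3+e4*d^4*y^4)"
  unfolding assms PeF_def by algebra

lemma eq2:
  fixes e1 e2 e3 e4 L z Pe d A1 A2 y yb g gb fb :: complex
  assumes "Pe = PeF e1 e2 e3 e4 L"
  and "d = (e4-L^2)^2"
  and "A1 = -L*(e4*e1+2*e3*L+e1*L^2)" and "A2 = -L*(e4*e3+2*e4*e1*L+e3*L^2)"
  and "y = e4*z" and "yb = L^2*z"
  and "g = L*y^2+A2*y+e4*Pe" and "gb = L*yb^2+A2*yb+e4*Pe" and "fb = yb^2+A1*yb+L*Pe"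
  shows "yb*(g*fb-d^2*y*yb)*(gb*fb-d^2*yb^2)
   = y*(e4*fb^4-e3*fb^3*d*yb+e2*fb^2*d^2*yb^2-e1*fb*d^3*yb^3+d^4*yb^4)"
  unfolding assms PeF_def by algebra

lemma prodG:
  fixes b1 b2 b3 b4 G :: complex
  assumes "b1 \<noteq> 0" "b2 \<noteq> 0" "b3 \<noteq> 0" "b4 \<noteq> 0"
  shows "(inverse b1 * G - 1) * (inverse b2 * G - 1) * (inverse b3 * G - 1) * (inverse b4 * G - 1)
    = (G^4 - esym1 b1 b2 b3 b4 * G^3 + esym2 b1 b2 b3 b4 * G^2 - esym3 b1 b2 b3 b4 * G + esym4 b1 b2 b3 b4) / esym4 b1 b2 b3 b4"
  using assms unfolding esym1_def esym2_def esym3_def esym4_def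
  by (simp add: field_simps) algebra

lemma prodF:
  fixes b1 b2 b3 b4 G :: complex
  shows "(b1*G - 1) * (b2*G - 1) * (b3*G - 1) * (b4*G - 1)
    = esym4 b1 b2 b3 b4 * G^4 - esym3 b1 b2 b3 b4 * G^3 + esym2 b1 b2 b3 b4 * G^2 - esym1 b1 b2 b3 b4 * G + 1"
  unfolding esym1_def esym2_def esym3_def esym4_def by algebra

lemma Pe_prod:
  fixes b1 b2 b3 b4 L :: complex
  shows "L * (L + b1*b2) * (L + b1*b3) * (L + b1*b4) * (L + b2*b3) * (L + b2*b4) * (L + b3*b4)
    = L * PeF (esym1 b1 b2 b3 b4) (esym2 b1 b2 b3 b4) (esym3 b1 b2 b3 b4) (esym4 b1 b2 b3 b4) L"
  unfolding esym1_def esym2_def esym3_def esym4_def PeF_def by algebra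

theorem mainTheorem3:
  fixes b1 b2 b3 b4 L \<phi> :: complex
  assumes "b1 \<noteq> 0" "b2 \<noteq> 0" "b3 \<noteq> 0" "b4 \<noteq> 0" "L \<noteq> 0"
    and "L^2 \<noteq> Bprod b1 b2 b3 b4"
    and "\<phi> \<noteq> 0"
  shows "let lam = L^2 / Bprod b1 b2 b3 b4;
             F = Ffun b1 b2 b3 b4 L \<phi>; G = Gfun b1 b2 b3 b4 L \<phi>;
             Fb = Ffun b1 b2 b3 b4 L (lam * \<phi>); Gb = Gfun b1 b2 b3 b4 L (lam * \<phi>)
         in (G*F - 1) * (G*Fb - 1)
              = (inverse b1 * G - 1) * (inverse b2 * G - 1) * (inverse b3 * G - 1) * (inverse b4 * G - 1)
          \<and> (G*Fb - 1) * (Gb*Fb - 1)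
              = (b1*Fb - 1) * (b2*Fb - 1) * (b3*Fb - 1) * (b4*Fb - 1)"
proof -
  note nz = assms(1-4)
  define e1 where "e1 = esym1 b1 b2 b3 b4"
  define e2 where "e2 = esym2 b1 b2 b3 b4"
  define e3 where "e3 = esym3 b1 b2 b3 b4"
  define e4 where "e4 = esym4 b1 b2 b3 b4"
  have B: "Bprod b1 b2 b3 b4 = e4" unfolding e4_def esym4_def Bprod_def by simp
  have e4nz: "e4 \<noteq> 0" using nz unfolding e4_def esym4_def by simp
  define d where "d = (e4-L^2)^2"
  have dnz: "d \<noteq> 0" using assms(6) B unfolding d_def by auto
  have D0: "e4 - L^2 \<noteq> 0" using assms(6) B by auto
  define Pe where "Pe = PeF e1 e2 e3 e4 L"
  define A1 where "A1 = -L*(e4*e1+2*e3*L+e1*L^2)"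
  define A2 where "A2 = -L*(e4*e3+2*e4*e1*L+e3*L^2)"
  have Sm1: "Sm1 b1 b2 b3 b4 = e3/e4" using nz unfolding Sm1_def e3_def e4_def esym1_def esym3_def esym4_def
    by (simp add: field_simps)
  have Sm3: "Sm3 b1 b2 b3 b4 = e1/e4" using nz unfolding Sm3_def e1_def e4_def esym1_def esym3_def esym4_def
    by (simp add: field_simps)
  have Feq: "Feq b1 b2 b3 b4 L = A1/d"
    unfolding Feq_def B Sm1 Sm3 A1_def d_def Sp1_def Sp3_def e1_def[symmetric] e3_def[symmetric]
    using e4nz D0 by (simp add: field_simps)
  have Geq: "Geq b1 b2 b3 b4 L = A2/d"
    unfolding Geq_def B Sm1 Sm3 A2_def d_def Sp1_def Sp3_def e1_def[symmetric] e3_def[symmetric]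
    using e4nz D0 by (simp add: field_simps)
  have mu: "muc b1 b2 b3 b4 L = L*Pe/d^2"
    unfolding muc_def Pe_prod B Pe_def e1_def e2_def e3_def e4_def d_def
    by (simp add: power_mult_distrib flip: power_mult)
  define y where "y = \<phi>*d"
  define z where "z = y/e4"
  define yb where "yb = L^2*z"
  have ynz: "y \<noteq> 0" using dnz assms(7) unfolding y_def by simp
  have ybnz: "yb \<noteq> 0" using ynz e4nz assms(5) unfolding yb_def z_def by simp
  have yz: "y = e4*z" unfolding z_def using e4nz by simp
  have phi: "\<phi> = y/d" unfolding y_def using dnz by simp
  have lphi: "L^2 / Bprod b1 b2 b3 b4 * \<phi> = yb/d" unfolding B yb_def z_def phi by simp
  define g where "g = L*y^2+A2*y+e4*Pe"
  define gb where "gb = L*yb^2+A2*yb+e4*Pe"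
  define f where "f = y^2+A1*y+L*Pe"
  define fb where "fb = yb^2+A1*yb+L*Pe"
  have FF: "Ffun b1 b2 b3 b4 L \<phi> = f/(d*y)"
    unfolding Ffun_def Feq mu f_def phi using dnz ynz by (simp add: field_simps power2_eq_square)
  have FFb: "Ffun b1 b2 b3 b4 L (yb/d) = fb/(d*yb)"
    unfolding Ffun_def Feq mu fb_def using dnz ybnz by (simp add: field_simps power2_eq_square)
  have GG: "Gfun b1 b2 b3 b4 L \<phi> = g/(d*y)"
    unfolding Gfun_def Geq mu g_def phi B using dnz ynz assms(5) by (simp add: field_simps power2_eq_square)
  have GGb: "Gfun b1 b2 b3 b4 L (yb/d) = gb/(d*yb)"
    unfolding Gfun_def Geq mu gb_def B using dnz ybnz assms(5) by (simp add: field_simps power2_eq_square)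
  have E1: "e4*y*(g*f-d^2*y^2)*(g*fb-d^2*y*yb)
   = yb*(g^4-e1*g^3*d*y+e2*g^2*d^2*y^2-e3*g*d^3*y^3+e4*d^4*y^4)"
    by (rule eq1[OF Pe_def d_def A1_def A2_def yz yb_def g_def f_def fb_def])
  have E2: "yb*(g*fb-d^2*y*yb)*(gb*fb-d^2*yb^2)
   = y*(e4*fb^4-e3*fb^3*d*yb+e2*fb^2*d^2*yb^2-e1*fb*d^3*yb^3+d^4*yb^4)"
    by (rule eq2[OF Pe_def d_def A1_def A2_def yz yb_def g_def gb_def fb_def])
  have L1: "(g/(d*y)*(f/(d*y)) - 1) * (g/(d*y)*(fb/(d*yb)) - 1)
     = ((g/(d*y))^4 - e1*(g/(d*y))^3 + e2*(g/(d*y))^2 - e3*(g/(d*y)) + e4)/e4"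
  proof -
    have "(g/(d*y)*(f/(d*y)) - 1) * (g/(d*y)*(fb/(d*yb)) - 1)
       = ((g*f-d^2*y^2)*(g*fb-d^2*y*yb)) / (d^4*y^3*yb)"
      using dnz ynz ybnz by (simp add: divide_simps) algebra
    also have "... = (g^4-e1*g^3*d*y+e2*g^2*d^2*y^2-e3*g*d^3*y^3+e4*d^4*y^4) / (e4*d^4*y^4)"
      using dnz ynz ybnz e4nz by (simp add: frac_eq_eq) (use E1 in algebra)
    also have "... = ((g/(d*y))^4 - e1*(g/(d*y))^3 + e2*(g/(d*y))^2 - e3*(g/(d*y)) + e4)/e4"
      using dnz ynz e4nz by (simp add: field_simps power2_eq_square power3_eq_cube power4_eq_xxxx)
    finally show ?thesis .
  qed
  have L2: "(g/(d*y)*(fb/(d*yb)) - 1) * (gb/(d*yb)*(fb/(d*yb)) - 1)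
     = e4*(fb/(d*yb))^4 - e3*(fb/(d*yb))^3 + e2*(fb/(d*yb))^2 - e1*(fb/(d*yb)) + 1"
  proof -
    have "(g/(d*y)*(fb/(d*yb)) - 1) * (gb/(d*yb)*(fb/(d*yb)) - 1)
       = ((g*fb-d^2*y*yb)*(gb*fb-d^2*yb^2)) / (d^4*y*yb^3)"
      using dnz ynz ybnz by (simp add: divide_simps) algebra
    also have "... = (e4*fb^4-e3*fb^3*d*yb+e2*fb^2*d^2*yb^2-e1*fb*d^3*yb^3+d^4*yb^4) / (d^4*yb^4)"
      using dnz ynz ybnz e4nz by (simp add: frac_eq_eq) (use E2 in algebra)
    also have "... = e4*(fb/(d*yb))^4 - e3*(fb/(d*yb))^3 + e2*(fb/(d*yb))^2 - e1*(fb/(d*yb)) + 1"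
      using dnz ybnz by (simp add: field_simps power2_eq_square power3_eq_cube power4_eq_xxxx)
    finally show ?thesis .
  qed
  have PF: "(b1*(fb/(d*yb)) - 1) * (b2*(fb/(d*yb)) - 1) * (b3*(fb/(d*yb)) - 1) * (b4*(fb/(d*yb)) - 1)
     = e4*(fb/(d*yb))^4 - e3*(fb/(d*yb))^3 + e2*(fb/(d*yb))^2 - e1*(fb/(d*yb)) + 1"
    unfolding e1_def e2_def e3_def e4_def by (rule prodF)
  show ?thesis
    unfolding Let_def lphi FF FFb GG GGb
    unfolding prodG[OF nz]
    unfolding prodF[of b1 b2 b3 b4]
    unfolding e1_def[symmetric] e2_def[symmetric] e3_def[symmetric] e4_def[symmetric]
    using L1 L2 PF by simp
qed

end
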